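(* Let $R$ be a $\Bbbk$-algebra, $\hbar\in Z(R)$ a regular central element, $R_0=R/\hbar R$ with projection $\theta:R\to R_0$, $R_0$ module-finite over $Z(R_0)$, and $\iota:R_0\to R$ a linear section of $\theta$ such that $[\iota(z),r]\in\hbar^NR$ for all $z\in Z(R_0)$, $r\in R$ and some positive integer $N$. Let $\partial_z(w)=\theta([\iota(z),\widetilde w]/\hbar^N)$ ($\widetilde w\in\theta^{-1}(w)$) and $\{z,z'\}=\partial_z(z')$ the resulting Poisson bracket on $Z(R_0)$. (1) If $C\subseteq Z(R_0)$ is a Poisson subalgebra for this bracket and $R_0$ is module-finite over $C$, then $R_0$ is a Poisson $C$-order via the restriction of $\partial$ to $C$. (2) If moreover the restriction $\iota|_C:C\to R$ is an algebra homomorphism, then $\partial_{zz'}(w)=z\,\partial_{z'}(w)+z'\,\partial_z(w)$ for all $z,z'\in C$, $w\in R_0$.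
   Context: $\Bbbk$ is a field, $[r,r']=rr'-r'r$. A Poisson $C$-order is an algebra $A$ module-finite over a central subalgebra $C$ with a linear map $\partial:C\to\mathrm{Der}(A/C)$ (derivations of $A$ preserving $C$) such that $\{z,z'\}=\partial_z(z')$ makes $C$ a Poisson algebra. The map $\partial$ above is well defined and makes $R_0$ a Poisson $Z(R_0)$-order. *)

theory Defs
  imports Main
begin

definition is_algebra :: "('k::field \<Rightarrow> 'a::ring_1 \<Rightarrow> 'a) \<Rightarrow> bool" where
  "is_algebra sc \<longleftrightarrow>
     (\<forall>a x y. sc a (x + y) = sc a x + sc a y) \<and>
     (\<forall>a b x. sc (a + b) x = sc a x + sc b x) \<and>
     (\<forall>a b x. sc (a * b) x = sc a (sc b x)) \<and>
     (\<forall>x. sc 1 x = x) \<and>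
     (\<forall>a x y. sc a (x * y) = sc a x * y) \<and>
     (\<forall>a x y. sc a (x * y) = x * sc a y)"

definition k_linear :: "('k::field \<Rightarrow> 'a::ring_1 \<Rightarrow> 'a) \<Rightarrow> ('k \<Rightarrow> 'b::ring_1 \<Rightarrow> 'b)
    \<Rightarrow> ('a \<Rightarrow> 'b) \<Rightarrow> bool" where
  "k_linear sa sb f \<longleftrightarrow> (\<forall>x y. f (x + y) = f x + f y) \<and> (\<forall>a x. f (sa a x) = sb a (f x))"

definition center :: "'a::ring_1 set" where
  "center = {z. \<forall>w. z * w = w * z}"

definition commutator :: "'a::ring_1 \<Rightarrow> 'a \<Rightarrow> 'a" where
  "commutator r r' = r * r' - r' * r"

definition is_subalgebra :: "('k::field \<Rightarrow> 'a::ring_1 \<Rightarrow> 'a) \<Rightarrow> 'a set \<Rightarrow> bool" where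
  "is_subalgebra sc C \<longleftrightarrow> 1 \<in> C \<and> (\<forall>x\<in>C. \<forall>y\<in>C. x + y \<in> C \<and> x * y \<in> C)
      \<and> (\<forall>a. \<forall>x\<in>C. sc a x \<in> C)"

definition module_finite :: "'a::ring_1 set \<Rightarrow> bool" where
  "module_finite C \<longleftrightarrow> (\<exists>S. finite S \<and>
      (\<forall>a. \<exists>f. (\<forall>s\<in>S. f s \<in> C) \<and> a = (\<Sum>s\<in>S. f s * s)))"

definition is_derivation :: "('k::field \<Rightarrow> 'a::ring_1 \<Rightarrow> 'a) \<Rightarrow> ('a \<Rightarrow> 'a) \<Rightarrow> bool" where
  "is_derivation sc D \<longleftrightarrow> k_linear sc sc D \<and> (\<forall>x y. D (x * y) = D x * y + x * D y)"

definition is_derivation_rel :: "('k::field \<Rightarrow> 'a::ring_1 \<Rightarrow> 'a) \<Rightarrow> 'a set \<Rightarrow> ('a \<Rightarrow> 'a) \<Rightarrow> bool" where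
  "is_derivation_rel sc C D \<longleftrightarrow> is_derivation sc D \<and> (\<forall>c\<in>C. D c \<in> C)"

definition poisson_algebra :: "('k::field \<Rightarrow> 'a::ring_1 \<Rightarrow> 'a) \<Rightarrow> 'a set \<Rightarrow> ('a \<Rightarrow> 'a \<Rightarrow> 'a) \<Rightarrow> bool" where
  "poisson_algebra sc C br \<longleftrightarrow>
     is_subalgebra sc C \<and> (\<forall>x\<in>C. \<forall>y\<in>C. x * y = y * x) \<and>
     (\<forall>x\<in>C. \<forall>y\<in>C. br x y \<in> C) \<and>
     (\<forall>x\<in>C. \<forall>y\<in>C. \<forall>z\<in>C. br (x + y) z = br x z + br y z \<and> br z (x + y) = br z x + br z y) \<and>
     (\<forall>a. \<forall>x\<in>C. \<forall>y\<in>C. br (sc a x) y = sc a (br x y) \<and> br x (sc a y) = sc a (br x y)) \<and>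
     (\<forall>x\<in>C. br x x = 0) \<and>
     (\<forall>x\<in>C. \<forall>y\<in>C. br x y = - br y x) \<and>
     (\<forall>x\<in>C. \<forall>y\<in>C. \<forall>z\<in>C. br x (br y z) = br (br x y) z + br y (br x z)) \<and>
     (\<forall>x\<in>C. \<forall>y\<in>C. \<forall>z\<in>C. br x (y * z) = br x y * z + y * br x z)"

text \<open>A is a Poisson C-order via d (only values d z for z in C matter):
  C is a central subalgebra, A module-finite over C, z \<mapsto> d z is a k-linear map
  C \<rightarrow> Der(A/C), and {z,z'} = d z z' makes C a Poisson algebra.\<close>
definition poisson_order :: "('k::field \<Rightarrow> 'a::ring_1 \<Rightarrow> 'a) \<Rightarrow> 'a set \<Rightarrow> ('a \<Rightarrow> 'a \<Rightarrow> 'a) \<Rightarrow> bool" where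
  "poisson_order sc C d \<longleftrightarrow>
     is_subalgebra sc C \<and> C \<subseteq> center \<and> module_finite C \<and>
     (\<forall>z\<in>C. is_derivation_rel sc C (d z)) \<and>
     (\<forall>z\<in>C. \<forall>z'\<in>C. d (z + z') = (\<lambda>w. d z w + d z' w)) \<and>
     (\<forall>a. \<forall>z\<in>C. d (sc a z) = (\<lambda>w. sc a (d z w))) \<and>
     poisson_algebra sc C (\<lambda>z z'. d z z')"

text \<open>The map \<partial>: \<partial>_z(w) = \<theta>([\<iota>(z), w~]/\<hbar>^N), using the lift w~ = \<iota>(w).\<close>
definition pdel :: "('r::ring_1 \<Rightarrow> 'r0::ring_1) \<Rightarrow> ('r0 \<Rightarrow> 'r) \<Rightarrow> 'r \<Rightarrow> nat \<Rightarrow> 'r0 \<Rightarrow> 'r0 \<Rightarrow> 'r0" where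
  "pdel \<theta> \<iota> h N z w = \<theta> (THE x. h ^ N * x = commutator (\<iota> z) (\<iota> w))"

end

theory Submission
  imports Defs
begin

lemma comm_mult_right: "commutator (a::'a::ring_1) (b * c) = commutator a b * c + b * commutator a c"
  unfolding commutator_def by (simp add: algebra_simps)

lemma comm_mult_left: "commutator ((a::'a::ring_1) * b) c = a * commutator b c + commutator a c * b"
  unfolding commutator_def by (simp add: algebra_simps)

lemma comm_jacobi: "commutator (a::'a::ring_1) (commutator b c)
   = commutator (commutator a b) c + commutator b (commutator a c)"
  unfolding commutator_def by (simp add: algebra_simps)

lemma comm_antisym: "commutator (a::'a::ring_1) b = - commutator b a"
  unfolding commutator_def by simp

lemma comm_add_right: "commutator (a::'a::ring_1) (b + c) = commutator a b + commutator a c"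
  unfolding commutator_def by (simp add: algebra_simps)

lemma comm_add_left: "commutator ((a::'a::ring_1) + b) c = commutator a c + commutator b c"
  unfolding commutator_def by (simp add: algebra_simps)

lemma comm_diff_right: "commutator (a::'a::ring_1) (b - c) = commutator a b - commutator a c"
  unfolding commutator_def by (simp add: algebra_simps)

lemma comm_self: "commutator (a::'a::ring_1) a = 0"
  unfolding commutator_def by simp

lemma add_hom_0: "(\<forall>x y. f (x + y) = f x + f y) \<Longrightarrow> (f::'a::ring_1\<Rightarrow>'b::ring_1) 0 = 0"
proof -
  assume a: "\<forall>x y. f (x + y) = f x + f y"
  have "f 0 = f 0 + f 0" using a[rule_format, of 0 0] by simp
  then show ?thesis by simp
qed

lemma add_hom_minus: "(\<forall>x y. f (x + y) = f x + (f y::'b::ring_1)) \<Longrightarrow> f (- (x::'a::ring_1)) = - f x"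
proof -
  assume a: "\<forall>x y. f (x + y) = f x + (f y::'b::ring_1)"
  have "f x + f (- x) = 0" using a[rule_format, of x "- x"] add_hom_0[OF a] by simp
  then show ?thesis by (simp add: neg_eq_iff_add_eq_0[symmetric])
qed

lemma add_hom_diff: "(\<forall>x y. f (x + y) = f x + (f y::'b::ring_1)) \<Longrightarrow> f ((x::'a::ring_1) - y) = f x - f y"
proof -
  assume a: "\<forall>x y. f (x + y) = f x + (f y::'b::ring_1)"
  have "f (x + - y) = f x + f (- y)" using a by blast
  then show ?thesis using add_hom_minus[OF a, of y] by simp
qed

locale ctx =
  fixes sR :: "'k::field \<Rightarrow> 'r::ring_1 \<Rightarrow> 'r"
    and s0 :: "'k \<Rightarrow> 'r0::ring_1 \<Rightarrow> 'r0"
    and \<theta> :: "'r \<Rightarrow> 'r0" and \<iota> :: "'r0 \<Rightarrow> 'r"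
    and h :: 'r and N :: nat
  assumes algR: "is_algebra sR" and alg0: "is_algebra s0"
    and h_central: "h \<in> center"
    and h_regular: "\<forall>x. h * x = 0 \<longrightarrow> x = 0"
    and theta_lin: "k_linear sR s0 \<theta>"
    and theta_mult: "\<forall>x y. \<theta> (x * y) = \<theta> x * \<theta> y"
    and theta_ker: "\<forall>x. \<theta> x = 0 \<longleftrightarrow> (\<exists>r. x = h * r)"
    and iota_lin: "k_linear s0 sR \<iota>"
    and iota_section: "\<forall>w. \<theta> (\<iota> w) = w"
    and comm_div: "\<forall>z\<in>(center :: 'r0 set). \<forall>r. \<exists>x. commutator (\<iota> z) r = h ^ N * x"
begin

lemma hc: "h * x = x * h" using h_central unfolding center_def by auto

lemma hpow_comm: "h ^ n * x = x * h ^ n"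
proof (induction n)
  case 0 then show ?case by simp
next
  case (Suc n)
  have "h ^ Suc n * x = h * (h ^ n * x)" by (simp add: mult.assoc)
  also have "\<dots> = (h * x) * h ^ n" by (simp add: Suc mult.assoc)
  also have "\<dots> = x * h ^ Suc n" by (simp add: hc mult.assoc)
  finally show ?case .
qed

lemma hpow_reg: "h ^ n * x = 0 \<Longrightarrow> x = 0"
proof (induction n arbitrary: x)
  case 0 then show ?case by simp
next
  case (Suc n)
  then have "h * (h ^ n * x) = 0" by (simp add: mult.assoc)
  then have "h ^ n * x = 0" using h_regular by blast
  then show ?case using Suc by blast
qed

lemma hpow_cancel: "h ^ n * x = h ^ n * y \<Longrightarrow> x = y"
  using hpow_reg[of n "x - y"] by (simp add: algebra_simps)

lemma hpow_swap: "h ^ n * (a * b) = a * (h ^ n * b)"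
  by (metis mult.assoc hpow_comm)

lemma comm_hpow_right: "commutator a (h ^ n * s) = h ^ n * commutator a s"
proof -
  have "a * (h ^ n * s) = h ^ n * (a * s)" by (rule hpow_swap[symmetric])
  then show ?thesis unfolding commutator_def by (simp add: right_diff_distrib mult.assoc)
qed

lemma comm_hpow_left: "commutator (h ^ n * s) a = h ^ n * commutator s a"
proof -
  have "a * (h ^ n * s) = h ^ n * (a * s)" by (rule hpow_swap[symmetric])
  then show ?thesis unfolding commutator_def by (simp add: right_diff_distrib mult.assoc)
qed

lemma comm_h_right: "commutator a (h * s) = h * commutator a s"
  using comm_hpow_right[of a 1 s] by simp

lemma th_add: "\<theta> (x + y) = \<theta> x + \<theta> y" using theta_lin unfolding k_linear_def by blast
lemma th_sc: "\<theta> (sR c x) = s0 c (\<theta> x)" using theta_lin unfolding k_linear_def by blast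
lemma th_0: "\<theta> 0 = 0" by (rule add_hom_0) (simp add: th_add)
lemma th_minus: "\<theta> (- x) = - \<theta> x" by (rule add_hom_minus) (simp add: th_add)
lemma th_diff: "\<theta> (x - y) = \<theta> x - \<theta> y" by (rule add_hom_diff) (simp add: th_add)
lemma io_add: "\<iota> (x + y) = \<iota> x + \<iota> y" using iota_lin unfolding k_linear_def by blast
lemma io_sc: "\<iota> (s0 c x) = sR c (\<iota> x)" using iota_lin unfolding k_linear_def by blast

lemma sR_add: "sR c (x + y) = sR c x + sR c y" using algR unfolding is_algebra_def by blast
lemma sR_diff: "sR c (x - y) = sR c x - sR c y" by (rule add_hom_diff) (simp add: sR_add)
lemma sR_ml: "sR c (x * y) = sR c x * y" using algR unfolding is_algebra_def by blast
lemma sR_mr: "sR c (x * y) = x * sR c y" using algR unfolding is_algebra_def by blast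

lemma comm_sR_right: "commutator a (sR c r) = sR c (commutator a r)"
  unfolding commutator_def by (simp add: sR_diff sR_mr[of c a r, symmetric] sR_ml[of c r a, symmetric])
lemma comm_sR_left: "commutator (sR c a) r = sR c (commutator a r)"
  unfolding commutator_def by (simp add: sR_diff sR_ml[of c a r, symmetric] sR_mr[of c r a, symmetric])

definition Q where "Q z r = (SOME x. h ^ N * x = commutator (\<iota> z) r)"

lemma Q: "z \<in> center \<Longrightarrow> h ^ N * Q z r = commutator (\<iota> z) r"
  unfolding Q_def by (rule someI_ex) (metis comm_div)

lemma Q_unique: "z \<in> center \<Longrightarrow> h ^ N * x = commutator (\<iota> z) r \<Longrightarrow> Q z r = x"
  using Q hpow_cancel by metis

lemma pdel_Q: "z \<in> center \<Longrightarrow> pdel \<theta> \<iota> h N z w = \<theta> (Q z (\<iota> w))"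
  unfolding pdel_def
  by (rule arg_cong[where f=\<theta>], rule the_equality, erule Q, metis Q hpow_cancel)

lemma lift2: assumes z: "z \<in> center" and r: "\<theta> r = w"
  shows "pdel \<theta> \<iota> h N z w = \<theta> (Q z r)"
proof -
  have "\<theta> (r - \<iota> w) = 0" using r iota_section by (simp add: th_diff)
  then obtain s where s: "r - \<iota> w = h * s" using theta_ker by blast
  have "h ^ N * (Q z r - Q z (\<iota> w)) = commutator (\<iota> z) (r - \<iota> w)"
    by (simp add: right_diff_distrib Q[OF z] comm_diff_right)
  also have "\<dots> = h * (h ^ N * Q z s)" by (simp add: s comm_h_right Q[OF z])
  also have "\<dots> = h ^ N * (h * Q z s)" by (metis mult.assoc power_commutes power_Suc)
  finally have "Q z r - Q z (\<iota> w) = h * Q z s" by (rule hpow_cancel)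
  then have "\<theta> (Q z r - Q z (\<iota> w)) = 0" using theta_ker by blast
  then show ?thesis by (simp add: th_diff pdel_Q[OF z])
qed

lemma antisym: assumes w: "w \<in> center" shows "pdel \<theta> \<iota> h N u w = - pdel \<theta> \<iota> h N w u"
proof -
  have "h ^ N * (- Q w (\<iota> u)) = commutator (\<iota> u) (\<iota> w)"
    by (simp add: Q[OF w] comm_antisym[of "\<iota> w"])
  then have "(THE x. h ^ N * x = commutator (\<iota> u) (\<iota> w)) = - Q w (\<iota> u)"
    by (metis (mono_tags, lifting) the_equality hpow_cancel)
  then have "pdel \<theta> \<iota> h N u w = \<theta> (- Q w (\<iota> u))" unfolding pdel_def by simp
  then show ?thesis by (simp add: th_minus pdel_Q[OF w])
qed

lemma lift1: assumes w: "w \<in> center" and r: "\<theta> r = u" and x: "h ^ N * x = commutator r (\<iota> w)"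
  shows "pdel \<theta> \<iota> h N u w = \<theta> x"
proof -
  have "h ^ N * x = h ^ N * (- Q w r)" using x by (simp add: Q[OF w] comm_antisym[of r])
  then have "x = - Q w r" by (rule hpow_cancel)
  then show ?thesis using antisym[OF w, of u] lift2[OF w r] by (simp add: th_minus)
qed

lemma s0_add: "s0 c (x + y) = s0 c x + s0 c y" using alg0 unfolding is_algebra_def by blast

lemma pdel_add_w: assumes z: "z \<in> center"
  shows "pdel \<theta> \<iota> h N z (w + w') = pdel \<theta> \<iota> h N z w + pdel \<theta> \<iota> h N z w'"
proof -
  have "h ^ N * (Q z (\<iota> w) + Q z (\<iota> w')) = commutator (\<iota> z) (\<iota> w + \<iota> w')"
    by (simp add: distrib_left Q[OF z] comm_add_right)
  then have "Q z (\<iota> w + \<iota> w') = Q z (\<iota> w) + Q z (\<iota> w')" by (rule Q_unique[OF z])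
  moreover have "pdel \<theta> \<iota> h N z (w + w') = \<theta> (Q z (\<iota> w + \<iota> w'))"
    by (rule lift2[OF z]) (simp add: th_add iota_section)
  ultimately show ?thesis by (simp add: th_add pdel_Q[OF z])
qed

lemma pdel_sc_w: assumes z: "z \<in> center"
  shows "pdel \<theta> \<iota> h N z (s0 c w) = s0 c (pdel \<theta> \<iota> h N z w)"
proof -
  have "h ^ N * sR c (Q z (\<iota> w)) = commutator (\<iota> z) (sR c (\<iota> w))"
    by (simp add: sR_mr[symmetric] Q[OF z] comm_sR_right)
  then have "Q z (sR c (\<iota> w)) = sR c (Q z (\<iota> w))" by (rule Q_unique[OF z])
  then show ?thesis using pdel_Q[OF z] by (simp add: io_sc th_sc)
qed

lemma pdel_mult_w: assumes z: "z \<in> center"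
  shows "pdel \<theta> \<iota> h N z (w * w') = pdel \<theta> \<iota> h N z w * w' + w * pdel \<theta> \<iota> h N z w'"
proof -
  have "h ^ N * (Q z (\<iota> w) * \<iota> w' + \<iota> w * Q z (\<iota> w'))
      = (h ^ N * Q z (\<iota> w)) * \<iota> w' + \<iota> w * (h ^ N * Q z (\<iota> w'))"
    by (simp only: distrib_left hpow_swap[of N "\<iota> w"] mult.assoc)
  also have "\<dots> = commutator (\<iota> z) (\<iota> w * \<iota> w')"
    by (simp only: Q[OF z] comm_mult_right)
  finally have "h ^ N * (Q z (\<iota> w) * \<iota> w' + \<iota> w * Q z (\<iota> w')) = commutator (\<iota> z) (\<iota> w * \<iota> w')" .
  then have "Q z (\<iota> w * \<iota> w') = Q z (\<iota> w) * \<iota> w' + \<iota> w * Q z (\<iota> w')" by (rule Q_unique[OF z])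
  moreover have "pdel \<theta> \<iota> h N z (w * w') = \<theta> (Q z (\<iota> w * \<iota> w'))"
    by (rule lift2[OF z]) (simp add: theta_mult iota_section)
  ultimately show ?thesis by (simp add: th_add theta_mult iota_section pdel_Q[OF z])
qed

lemma pdel_add_z: assumes z: "z \<in> center" and z': "z' \<in> center" and zz: "z + z' \<in> center"
  shows "pdel \<theta> \<iota> h N (z + z') w = pdel \<theta> \<iota> h N z w + pdel \<theta> \<iota> h N z' w"
proof -
  have "h ^ N * (Q z (\<iota> w) + Q z' (\<iota> w)) = commutator (\<iota> (z + z')) (\<iota> w)"
    by (simp add: distrib_left Q[OF z] Q[OF z'] comm_add_left io_add)
  then have "Q (z + z') (\<iota> w) = Q z (\<iota> w) + Q z' (\<iota> w)" by (rule Q_unique[OF zz])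
  then show ?thesis using pdel_Q[OF z] pdel_Q[OF z'] pdel_Q[OF zz] by (simp add: th_add)
qed

lemma pdel_sc_z: assumes z: "z \<in> center" and zz: "s0 c z \<in> center"
  shows "pdel \<theta> \<iota> h N (s0 c z) w = s0 c (pdel \<theta> \<iota> h N z w)"
proof -
  have "h ^ N * sR c (Q z (\<iota> w)) = commutator (\<iota> (s0 c z)) (\<iota> w)"
    by (simp add: sR_mr[symmetric] Q[OF z] comm_sR_left io_sc)
  then have "Q (s0 c z) (\<iota> w) = sR c (Q z (\<iota> w))" by (rule Q_unique[OF zz])
  then show ?thesis using pdel_Q[OF z] pdel_Q[OF zz] by (simp add: th_sc)
qed

lemma pdel_self: assumes z: "z \<in> center" shows "pdel \<theta> \<iota> h N z z = 0"
proof -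
  have "h ^ N * 0 = commutator (\<iota> z) (\<iota> z)" by (simp add: comm_self)
  then have "Q z (\<iota> z) = 0" by (rule Q_unique[OF z])
  then show ?thesis using pdel_Q[OF z] th_0 by simp
qed

lemma jacobi: assumes x: "x \<in> center" and y: "y \<in> center" and z: "z \<in> center"
  shows "pdel \<theta> \<iota> h N x (pdel \<theta> \<iota> h N y z)
    = pdel \<theta> \<iota> h N (pdel \<theta> \<iota> h N x y) z + pdel \<theta> \<iota> h N y (pdel \<theta> \<iota> h N x z)"
proof -
  define A where "A = Q x (\<iota> y)"
  define B where "B = Q y (\<iota> z)"
  define Cc where "Cc = Q x (\<iota> z)"
  have b1: "commutator (\<iota> y) (\<iota> z) = h ^ N * B" by (simp add: B_def Q[OF y])
  have b2: "commutator (\<iota> x) B = h ^ N * Q x B" by (simp add: Q[OF x])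
  have a1: "commutator (\<iota> x) (\<iota> y) = h ^ N * A" by (simp add: A_def Q[OF x])
  have a2: "commutator A (\<iota> z) = h ^ N * (- Q z A)"
    by (simp add: Q[OF z] comm_antisym[of A])
  have c1: "commutator (\<iota> x) (\<iota> z) = h ^ N * Cc" by (simp add: Cc_def Q[OF x])
  have c2: "commutator (\<iota> y) Cc = h ^ N * Q y Cc" by (simp add: Q[OF y])
  have "h ^ N * (h ^ N * Q x B) = commutator (\<iota> x) (commutator (\<iota> y) (\<iota> z))"
    by (simp only: b1 comm_hpow_right b2)
  also have "\<dots> = commutator (commutator (\<iota> x) (\<iota> y)) (\<iota> z)
      + commutator (\<iota> y) (commutator (\<iota> x) (\<iota> z))" by (rule comm_jacobi)
  also have "\<dots> = h ^ N * (h ^ N * (- Q z A + Q y Cc))"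
    by (simp only: a1 comm_hpow_left a2 c1 comm_hpow_right c2 distrib_left)
  finally have eq: "Q x B = - Q z A + Q y Cc" by (metis hpow_cancel)
  have 1: "pdel \<theta> \<iota> h N x (pdel \<theta> \<iota> h N y z) = \<theta> (Q x B)"
    by (rule lift2[OF x]) (simp add: B_def pdel_Q[OF y])
  have 3: "pdel \<theta> \<iota> h N y (pdel \<theta> \<iota> h N x z) = \<theta> (Q y Cc)"
    by (rule lift2[OF y]) (simp add: Cc_def pdel_Q[OF x])
  have 2: "pdel \<theta> \<iota> h N (pdel \<theta> \<iota> h N x y) z = \<theta> (- Q z A)"
    by (rule lift1[OF z]) (simp_all add: A_def pdel_Q[OF x] Q[OF z] comm_antisym[of _ "\<iota> z"])
  show ?thesis using 1 2 3 eq th_add[of "- Q z A" "Q y Cc"] by simp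
qed

lemma part2: assumes z: "z \<in> center" and z': "z' \<in> center" and zz: "z * z' \<in> center"
  and m: "\<iota> (z * z') = \<iota> z * \<iota> z'"
  shows "pdel \<theta> \<iota> h N (z * z') w = z * pdel \<theta> \<iota> h N z' w + z' * pdel \<theta> \<iota> h N z w"
proof -
  have "h ^ N * (\<iota> z * Q z' (\<iota> w) + Q z (\<iota> w) * \<iota> z')
     = \<iota> z * (h ^ N * Q z' (\<iota> w)) + (h ^ N * Q z (\<iota> w)) * \<iota> z'"
    by (simp only: distrib_left hpow_swap[of N "\<iota> z"] mult.assoc)
  also have "\<dots> = commutator (\<iota> (z * z')) (\<iota> w)"
    by (simp only: m Q[OF z] Q[OF z'] comm_mult_left)
  finally have "h ^ N * (\<iota> z * Q z' (\<iota> w) + Q z (\<iota> w) * \<iota> z') = commutator (\<iota> (z * z')) (\<iota> w)" .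
  then have "Q (z * z') (\<iota> w) = \<iota> z * Q z' (\<iota> w) + Q z (\<iota> w) * \<iota> z'" by (rule Q_unique[OF zz])
  then have "pdel \<theta> \<iota> h N (z * z') w = z * pdel \<theta> \<iota> h N z' w + pdel \<theta> \<iota> h N z w * z'"
    using pdel_Q[OF z] pdel_Q[OF z'] pdel_Q[OF zz] by (simp add: th_add theta_mult iota_section)
  moreover have "pdel \<theta> \<iota> h N z w * z' = z' * pdel \<theta> \<iota> h N z w"
    using z' unfolding center_def by auto
  ultimately show ?thesis by simp
qed

end

theorem corollary2p5:
  fixes sR :: "'k::field \<Rightarrow> 'r::ring_1 \<Rightarrow> 'r"
    and s0 :: "'k \<Rightarrow> 'r0::ring_1 \<Rightarrow> 'r0"
    and \<theta> :: "'r \<Rightarrow> 'r0" and \<iota> :: "'r0 \<Rightarrow> 'r"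
    and h :: 'r and N :: nat and C :: "'r0 set"
  assumes algR: "is_algebra sR" and alg0: "is_algebra s0"
    and h_central: "h \<in> center"
    and h_regular: "\<forall>x. h * x = 0 \<longrightarrow> x = 0"
    and theta_lin: "k_linear sR s0 \<theta>"
    and theta_mult: "\<forall>x y. \<theta> (x * y) = \<theta> x * \<theta> y" and theta_one: "\<theta> 1 = 1"
    and theta_surj: "surj \<theta>"
    and theta_ker: "\<forall>x. \<theta> x = 0 \<longleftrightarrow> (\<exists>r. x = h * r)"
    and R0_finite_center: "module_finite (center :: 'r0 set)"
    and iota_lin: "k_linear s0 sR \<iota>"
    and iota_section: "\<forall>w. \<theta> (\<iota> w) = w"
    and N_pos: "N > 0"
    and comm_div: "\<forall>z\<in>(center :: 'r0 set). \<forall>r. \<exists>x. commutator (\<iota> z) r = h ^ N * x"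
    and C_sub: "is_subalgebra s0 C" and C_center: "C \<subseteq> center"
    and C_poisson: "\<forall>z\<in>C. \<forall>z'\<in>C. pdel \<theta> \<iota> h N z z' \<in> C"
    and C_finite: "module_finite C"
  shows "poisson_order s0 C (pdel \<theta> \<iota> h N)
    \<and> ((\<forall>z\<in>C. \<forall>z'\<in>C. \<iota> (z * z') = \<iota> z * \<iota> z') \<and> \<iota> 1 = 1 \<longrightarrow>
       (\<forall>z\<in>C. \<forall>z'\<in>C. \<forall>w. pdel \<theta> \<iota> h N (z * z') w
           = z * pdel \<theta> \<iota> h N z' w + z' * pdel \<theta> \<iota> h N z w))"
proof -
  interpret ctx sR s0 \<theta> \<iota> h N
    by (unfold_locales; fact assms)
  let ?d = "pdel \<theta> \<iota> h N"
  have Cc: "\<And>z. z \<in> C \<Longrightarrow> z \<in> center" using C_center by blast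
  have Cadd: "\<And>x y. x \<in> C \<Longrightarrow> y \<in> C \<Longrightarrow> x + y \<in> C"
    and Cmul: "\<And>x y. x \<in> C \<Longrightarrow> y \<in> C \<Longrightarrow> x * y \<in> C"
    and Csc: "\<And>a x. x \<in> C \<Longrightarrow> s0 a x \<in> C"
    using C_sub unfolding is_subalgebra_def by blast+
  have der: "\<forall>z\<in>C. is_derivation_rel s0 C (?d z)"
  proof
    fix z assume z: "z \<in> C"
    show "is_derivation_rel s0 C (?d z)"
      unfolding is_derivation_rel_def is_derivation_def k_linear_def
      using pdel_add_w[OF Cc[OF z]] pdel_sc_w[OF Cc[OF z]] pdel_mult_w[OF Cc[OF z]] C_poisson z
      by simp
  qed
  have addz: "\<forall>z\<in>C. \<forall>z'\<in>C. ?d (z + z') = (\<lambda>w. ?d z w + ?d z' w)"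
  proof (intro ballI ext)
    fix z z' w assume a: "z \<in> C" "z' \<in> C"
    show "?d (z + z') w = ?d z w + ?d z' w" by (simp add: pdel_add_z Cc Cadd a)
  qed
  have scz: "\<forall>a. \<forall>z\<in>C. ?d (s0 a z) = (\<lambda>w. s0 a (?d z w))"
  proof (intro allI ballI ext)
    fix a z w assume b: "z \<in> C"
    show "?d (s0 a z) w = s0 a (?d z w)" by (simp add: pdel_sc_z Cc Csc b)
  qed
  have comm: "\<forall>x\<in>C. \<forall>y\<in>C. x * y = y * x" using C_center unfolding center_def by blast
  have pa: "poisson_algebra s0 C (\<lambda>z z'. ?d z z')"
    unfolding poisson_algebra_def
  proof (intro conjI)
    show "\<forall>x\<in>C. \<forall>y\<in>C. \<forall>z\<in>C. ?d (x + y) z = ?d x z + ?d y z \<and> ?d z (x + y) = ?d z x + ?d z y"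
    proof (intro ballI)
      fix x y z assume a: "x \<in> C" "y \<in> C" "z \<in> C"
      show "?d (x + y) z = ?d x z + ?d y z \<and> ?d z (x + y) = ?d z x + ?d z y"
        by (simp add: pdel_add_z pdel_add_w Cc Cadd a)
    qed
    show "\<forall>a. \<forall>x\<in>C. \<forall>y\<in>C. ?d (s0 a x) y = s0 a (?d x y) \<and> ?d x (s0 a y) = s0 a (?d x y)"
    proof (intro allI ballI)
      fix a x y assume b: "x \<in> C" "y \<in> C"
      show "?d (s0 a x) y = s0 a (?d x y) \<and> ?d x (s0 a y) = s0 a (?d x y)"
        by (simp add: pdel_sc_z pdel_sc_w Cc Csc b)
    qed
    show "\<forall>x\<in>C. ?d x x = 0" by (simp add: pdel_self Cc)
    show "\<forall>x\<in>C. \<forall>y\<in>C. ?d x y = - ?d y x"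
    proof (intro ballI)
      fix x y assume b: "x \<in> C" "y \<in> C"
      show "?d x y = - ?d y x" by (rule antisym) (simp add: Cc b)
    qed
    show "\<forall>x\<in>C. \<forall>y\<in>C. \<forall>z\<in>C. ?d x (?d y z) = ?d (?d x y) z + ?d y (?d x z)"
    proof (intro ballI)
      fix x y z assume b: "x \<in> C" "y \<in> C" "z \<in> C"
      show "?d x (?d y z) = ?d (?d x y) z + ?d y (?d x z)" by (rule jacobi) (simp_all add: Cc b)
    qed
    show "\<forall>x\<in>C. \<forall>y\<in>C. \<forall>z\<in>C. ?d x (y * z) = ?d x y * z + y * ?d x z"
    proof (intro ballI)
      fix x y z assume b: "x \<in> C" "y \<in> C" "z \<in> C"
      show "?d x (y * z) = ?d x y * z + y * ?d x z" by (rule pdel_mult_w) (simp add: Cc b)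
    qed
    show "is_subalgebra s0 C" by (rule C_sub)
    show "\<forall>x\<in>C. \<forall>y\<in>C. x * y = y * x" by (rule comm)
    show "\<forall>x\<in>C. \<forall>y\<in>C. ?d x y \<in> C" by (rule C_poisson)
  qed
  have p1: "poisson_order s0 C ?d"
    unfolding poisson_order_def using C_sub C_center C_finite der addz scz pa by blast
  show ?thesis
  proof (intro conjI impI ballI allI)
    show "poisson_order s0 C ?d" by (rule p1)
  next
    fix z z' w assume H: "(\<forall>z\<in>C. \<forall>z'\<in>C. \<iota> (z * z') = \<iota> z * \<iota> z') \<and> \<iota> 1 = 1"
      and z: "z \<in> C" and z': "z' \<in> C"
    show "?d (z * z') w = z * ?d z' w + z' * ?d z w"
    proof (rule part2)
      show "z \<in> center" "z' \<in> center" "z * z' \<in> center" using z z' by (simp_all add: Cc Cmul)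
      show "\<iota> (z * z') = \<iota> z * \<iota> z'" using H z z' by blast
    qed
  qed
qed

end
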